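(* Let $N\ge 1$ be an integer, $0<\lambda<1$, $\nu=1-\lambda$ and $0<\delta\le 1$. Then $F(N,\delta,\lambda)=\zeta(N,\delta,\lambda)/\delta$, where $$\zeta(N,\delta,\lambda)=\begin{cases}0,& \delta\le \lambda^N,\\ \zeta(N,\delta,\lambda,k_* ),&\delta>\lambda^N,\end{cases}\qquad \zeta(N,\delta,\lambda,k):=\frac{\lambda\{\delta[1+(N-k)\nu]-\lambda^k\}}{\nu(k\nu+N\lambda)},$$ and $k_*$ is the largest nonnegative integer $k$ satisfying $(N+1-k)\lambda^k+k\lambda^{k-1}\ge (N+1)\delta$ (with the convention that the left-hand side equals $N+1$ for $k=0$).
   Context: Let $\mathcal H$ be a Hilbert space of finite dimension $D\ge 2$ and $|\Psi\rangle\in\mathcal H$ a unit vector. For $0\le\lambda<1$ let $\Omega_\lambda=|\Psi\rangle\langle\Psi|+\lambda(1-|\Psi\rangle\langle\Psi|)$ (a homogeneous strategy). For an integer $N\ge1$ and a density operator $\rho$ on $\mathcal H^{\otimes(N+1)}$ put $p_\rho=\mathrm{tr}[(\Omega_\lambda^{\otimes N}\otimes 1)\rho]$ and $f_\rho=\mathrm{tr}[(\Omega_\lambda^{\otimes N}\otimes|\Psi\rangle\langle\Psi|)\rho]$. With minimization over permutation-invariant density operators $\rho$ on $\mathcal H^{\otimes(N+1)}$, define $\zeta(N,\delta,\lambda)=\min\{f_\rho: p_\rho\ge\delta\}$ for $0\le\delta\le1$ and $F(N,\delta,\lambda)=\min\{f_\rho/p_\rho: p_\rho\ge\delta\}$ for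 $0<\delta\le1$. *)

theory Defs
  imports Complex_Main "HOL-Combinatorics.Permutations"
begin

text \<open>Concrete model: H = C^D with computational basis indexed by 0..D-1;
  H^{(x)n} has basis indexed by lists of length n with entries < D.\<close>

definition idx :: "nat \<Rightarrow> nat \<Rightarrow> nat list set" where
  "idx D n = {xs. length xs = n \<and> set xs \<subseteq> {..<D}}"

definition kdelta :: "nat \<Rightarrow> nat \<Rightarrow> complex" where
  "kdelta a b = (if a = b then 1 else 0)"

definition proj :: "(nat \<Rightarrow> complex) \<Rightarrow> nat \<Rightarrow> nat \<Rightarrow> complex" where
  "proj psi a b = psi a * cnj (psi b)"

definition Omega :: "(nat \<Rightarrow> complex) \<Rightarrow> real \<Rightarrow> nat \<Rightarrow> nat \<Rightarrow> complex" where
  "Omega psi lam a b = proj psi a b + complex_of_real lam * (kdelta a b - proj psi a b)"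

text \<open>Matrix entries of A^{(x)N} (x) B on H^{(x)(N+1)}\<close>
definition tensorOp :: "nat \<Rightarrow> (nat \<Rightarrow> nat \<Rightarrow> complex) \<Rightarrow> (nat \<Rightarrow> nat \<Rightarrow> complex)
    \<Rightarrow> nat list \<Rightarrow> nat list \<Rightarrow> complex" where
  "tensorOp N A B i j = (\<Prod>t<N. A (i ! t) (j ! t)) * B (i ! N) (j ! N)"

definition trprod :: "nat \<Rightarrow> nat \<Rightarrow> (nat list \<Rightarrow> nat list \<Rightarrow> complex)
    \<Rightarrow> (nat list \<Rightarrow> nat list \<Rightarrow> complex) \<Rightarrow> complex" where
  "trprod D n X rho = (\<Sum>i\<in>idx D n. \<Sum>j\<in>idx D n. X i j * rho j i)"

definition density_op :: "nat \<Rightarrow> nat \<Rightarrow> (nat list \<Rightarrow> nat list \<Rightarrow> complex) \<Rightarrow> bool" where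
  "density_op D n rho \<longleftrightarrow>
     (\<forall>i\<in>idx D n. \<forall>j\<in>idx D n. rho i j = cnj (rho j i)) \<and>
     (\<forall>v :: nat list \<Rightarrow> complex.
        0 \<le> Re (\<Sum>i\<in>idx D n. \<Sum>j\<in>idx D n. cnj (v i) * rho i j * v j)) \<and>
     (\<Sum>i\<in>idx D n. rho i i) = 1"

definition permute_idx :: "(nat \<Rightarrow> nat) \<Rightarrow> nat list \<Rightarrow> nat list" where
  "permute_idx sigma xs = map (\<lambda>t. xs ! sigma t) [0..<length xs]"

text \<open>rho = P_sigma rho P_sigma^dagger for all permutations sigma\<close>
definition perm_inv :: "nat \<Rightarrow> nat \<Rightarrow> (nat list \<Rightarrow> nat list \<Rightarrow> complex) \<Rightarrow> bool" where
  "perm_inv D n rho \<longleftrightarrow>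
     (\<forall>sigma. sigma permutes {..<n} \<longrightarrow>
        (\<forall>i\<in>idx D n. \<forall>j\<in>idx D n.
            rho (permute_idx sigma i) (permute_idx sigma j) = rho i j))"

definition pval :: "nat \<Rightarrow> nat \<Rightarrow> (nat \<Rightarrow> complex) \<Rightarrow> real
    \<Rightarrow> (nat list \<Rightarrow> nat list \<Rightarrow> complex) \<Rightarrow> real" where
  "pval D N psi lam rho = Re (trprod D (N+1) (tensorOp N (Omega psi lam) kdelta) rho)"

definition fval :: "nat \<Rightarrow> nat \<Rightarrow> (nat \<Rightarrow> complex) \<Rightarrow> real
    \<Rightarrow> (nat list \<Rightarrow> nat list \<Rightarrow> complex) \<Rightarrow> real" where
  "fval D N psi lam rho = Re (trprod D (N+1) (tensorOp N (Omega psi lam) (proj psi)) rho)"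

definition feasible :: "nat \<Rightarrow> nat \<Rightarrow> (nat \<Rightarrow> complex) \<Rightarrow> real \<Rightarrow> real
    \<Rightarrow> (nat list \<Rightarrow> nat list \<Rightarrow> complex) set" where
  "feasible D N psi lam delta =
     {rho. density_op D (N+1) rho \<and> perm_inv D (N+1) rho \<and> pval D N psi lam rho \<ge> delta}"

text \<open>zeta(N,delta,lambda) and F(N,delta,lambda) (minima, written as infima)\<close>
definition zeta :: "nat \<Rightarrow> nat \<Rightarrow> (nat \<Rightarrow> complex) \<Rightarrow> real \<Rightarrow> real \<Rightarrow> real" where
  "zeta D N psi lam delta = Inf (fval D N psi lam ` feasible D N psi lam delta)"

definition Ffid :: "nat \<Rightarrow> nat \<Rightarrow> (nat \<Rightarrow> complex) \<Rightarrow> real \<Rightarrow> real \<Rightarrow> real" where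
  "Ffid D N psi lam delta =
     Inf ((\<lambda>rho. fval D N psi lam rho / pval D N psi lam rho) ` feasible D N psi lam delta)"

definition zeta_k :: "nat \<Rightarrow> real \<Rightarrow> real \<Rightarrow> nat \<Rightarrow> real" where
  "zeta_k N delta lam k =
     lam * (delta * (1 + (real N - real k) * (1 - lam)) - lam ^ k)
       / ((1 - lam) * (real k * (1 - lam) + real N * lam))"

definition kstar_lhs :: "nat \<Rightarrow> real \<Rightarrow> nat \<Rightarrow> real" where
  "kstar_lhs N lam k =
     (if k = 0 then real N + 1
      else (real N + 1 - real k) * lam ^ k + real k * lam ^ (k - 1))"

definition kstar :: "nat \<Rightarrow> real \<Rightarrow> real \<Rightarrow> nat" where
  "kstar N delta lam = (GREATEST k. kstar_lhs N lam k \<ge> (real N + 1) * delta)"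

definition zeta_formula :: "nat \<Rightarrow> real \<Rightarrow> real \<Rightarrow> real" where
  "zeta_formula N delta lam =
     (if delta \<le> lam ^ N then 0 else zeta_k N delta lam (kstar N delta lam))"

end

theory Submission
  imports Defs
begin

lemma finite_idx: "finite (idx D n)"
proof -
  have "idx D n = {xs. set xs \<subseteq> {..<D} \<and> length xs = n}" unfolding idx_def by auto
  then show ?thesis using finite_lists_length_eq[of "{..<D}" n] by simp
qed

lemma idx_Suc: "idx D (Suc n) = (\<lambda>(c,xs). c # xs) ` ({..<D} \<times> idx D n)"
  unfolding idx_def
  by (auto simp: length_Suc_conv image_iff)

lemma sum_idx_prod:
  "(\<Sum>k\<in>idx D n. \<Prod>t<n. F t (k!t)) = (\<Prod>t<n. \<Sum>c<D. F t c :: 'a::comm_semiring_1)"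
proof (induction n arbitrary: F)
  case 0
  have "idx D 0 = {[]}" unfolding idx_def by auto
  then show ?case by simp
next
  case (Suc n)
  have inj: "inj_on (\<lambda>(c,xs). c # xs) ({..<D} \<times> idx D n)" by (auto simp: inj_on_def)
  have "(\<Sum>k\<in>idx D (Suc n). \<Prod>t<Suc n. F t (k!t))
      = (\<Sum>(c,xs)\<in>{..<D} \<times> idx D n. \<Prod>t<Suc n. F t ((c#xs)!t))"
    unfolding idx_Suc by (subst sum.reindex[OF inj]) (simp add: case_prod_unfold)
  also have "\<dots> = (\<Sum>c<D. \<Sum>xs\<in>idx D n. F 0 c * (\<Prod>t<n. F (Suc t) (xs!t)))"
    by (subst sum.cartesian_product[symmetric]) (simp add: prod.lessThan_Suc_shift del: prod.lessThan_Suc)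
  also have "\<dots> = (\<Sum>c<D. F 0 c * (\<Prod>t<n. \<Sum>c<D. F (Suc t) c))"
    by (simp add: sum_distrib_left[symmetric] Suc.IH[of "\<lambda>t. F (Suc t)"])
  also have "\<dots> = (\<Prod>t<Suc n. \<Sum>c<D. F t c)"
    by (simp add: prod.lessThan_Suc_shift sum_distrib_right del: prod.lessThan_Suc)
  finally show ?case .
qed

lemma sum2_idx_prod:
  "(\<Sum>i\<in>idx D n. \<Sum>j\<in>idx D n. \<Prod>t<n. F t (i!t) (j!t))
     = (\<Prod>t<n. \<Sum>a<D. \<Sum>b<D. F t a b :: 'a::comm_semiring_1)"
proof -
  have "(\<Sum>i\<in>idx D n. \<Sum>j\<in>idx D n. \<Prod>t<n. F t (i!t) (j!t))
      = (\<Sum>i\<in>idx D n. \<Prod>t<n. \<Sum>b<D. F t (i!t) b)"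
    by (rule sum.cong[OF refl]) (rule sum_idx_prod)
  also have "\<dots> = (\<Prod>t<n. \<Sum>a<D. \<Sum>b<D. F t a b)"
    by (rule sum_idx_prod)
  finally show ?thesis .
qed


definition Qop :: "(nat \<Rightarrow> complex) \<Rightarrow> nat \<Rightarrow> nat \<Rightarrow> complex" where
  "Qop psi a b = kdelta a b - proj psi a b"
definition Rop :: "(nat \<Rightarrow> complex) \<Rightarrow> nat set \<Rightarrow> nat \<Rightarrow> nat \<Rightarrow> nat \<Rightarrow> complex" where
  "Rop psi T t = (if t \<in> T then Qop psi else proj psi)"
definition Eop :: "(nat \<Rightarrow> complex) \<Rightarrow> nat \<Rightarrow> nat set \<Rightarrow> nat list \<Rightarrow> nat list \<Rightarrow> complex" where
  "Eop psi n T i j = (\<Prod>t<n. Rop psi T t (i!t) (j!t))"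
definition wT :: "nat \<Rightarrow> nat \<Rightarrow> (nat \<Rightarrow> complex) \<Rightarrow> (nat list \<Rightarrow> nat list \<Rightarrow> complex) \<Rightarrow> nat set \<Rightarrow> real" where
  "wT D n psi rho T = Re (trprod D n (Eop psi n T) rho)"

lemma expand:
  "(\<Prod>t<n. proj psi (i!t) (j!t) + complex_of_real (c t) * Qop psi (i!t) (j!t))
    = (\<Sum>T\<in>Pow {..<n}. complex_of_real (\<Prod>t\<in>T. c t) * Eop psi n T i j)"
proof -
  have "(\<Prod>t<n. proj psi (i!t) (j!t) + complex_of_real (c t) * Qop psi (i!t) (j!t))
     = (\<Prod>t<n. complex_of_real (c t) * Qop psi (i!t) (j!t) + proj psi (i!t) (j!t))"
    by (simp add: add.commute)
  also have "\<dots> = (\<Sum>T\<in>Pow {..<n}. (\<Prod>t\<in>T. complex_of_real (c t) * Qop psi (i!t) (j!t))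
        * (\<Prod>t\<in>{..<n}-T. proj psi (i!t) (j!t)))"
    by (rule prod_add) simp
  also have "\<dots> = (\<Sum>T\<in>Pow {..<n}. complex_of_real (\<Prod>t\<in>T. c t) * Eop psi n T i j)"
  proof (rule sum.cong[OF refl])
    fix T assume T: "T \<in> Pow {..<n}"
    have "Eop psi n T i j = (\<Prod>t<n. if t \<in> T then Qop psi (i!t) (j!t) else proj psi (i!t) (j!t))"
      unfolding Eop_def Rop_def by (rule prod.cong) auto
    also have "\<dots> = (\<Prod>t\<in>{..<n} \<inter> {t. t \<in> T}. Qop psi (i!t) (j!t)) * (\<Prod>t\<in>{..<n} \<inter> - {t. t \<in> T}. proj psi (i!t) (j!t))"
      by (rule prod.If_cases) simp
    also have "{..<n} \<inter> {t. t \<in> T} = T" using T by auto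
    also have "{..<n} \<inter> - {t. t \<in> T} = {..<n} - T" by auto
    finally have "Eop psi n T i j = (\<Prod>t\<in>T. Qop psi (i!t) (j!t)) * (\<Prod>t\<in>{..<n} - T. proj psi (i!t) (j!t))" .
    then show "(\<Prod>t\<in>T. complex_of_real (c t) * Qop psi (i!t) (j!t)) * (\<Prod>t\<in>{..<n}-T. proj psi (i!t) (j!t))
      = complex_of_real (\<Prod>t\<in>T. c t) * Eop psi n T i j"
      by (simp add: prod.distrib of_real_prod mult.assoc)
  qed
  finally show ?thesis .
qed

lemma trprod_sum:
  assumes "finite S"
  shows "trprod D n (\<lambda>i j. \<Sum>T\<in>S. f T * X T i j) rho = (\<Sum>T\<in>S. f T * trprod D n (X T) rho)"
proof -
  have "trprod D n (\<lambda>i j. \<Sum>T\<in>S. f T * X T i j) rho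
      = (\<Sum>i\<in>idx D n. \<Sum>j\<in>idx D n. \<Sum>T\<in>S. f T * (X T i j * rho j i))"
    unfolding trprod_def by (simp add: sum_distrib_right mult.assoc)
  also have "\<dots> = (\<Sum>T\<in>S. \<Sum>i\<in>idx D n. \<Sum>j\<in>idx D n. f T * (X T i j * rho j i))"
    by (simp add: sum.swap[of _ S])
  also have "\<dots> = (\<Sum>T\<in>S. f T * trprod D n (X T) rho)"
    unfolding trprod_def by (simp add: sum_distrib_left)
  finally show ?thesis .
qed

lemma tensorOp_prod:
  "tensorOp N A B i j = (\<Prod>t<Suc N. (if t = N then B else A) (i!t) (j!t))"
  unfolding tensorOp_def by (simp add: prod.lessThan_Suc)

lemma Re_sum_of_real:
  "Re (\<Sum>T\<in>S. complex_of_real (g T) * z T) = (\<Sum>T\<in>S. g T * Re (z T))"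
  by (simp add: Re_sum)

definition cp :: "nat \<Rightarrow> real \<Rightarrow> nat \<Rightarrow> real" where
  "cp s lam t = (if t = s then 1 else lam)"
definition cf :: "nat \<Rightarrow> real \<Rightarrow> nat \<Rightarrow> real" where
  "cf s lam t = (if t = s then 0 else lam)"

lemma pval_expand:
  "pval D N psi lam rho = (\<Sum>T\<in>Pow {..<Suc N}. (\<Prod>t\<in>T. cp N lam t) * wT D (Suc N) psi rho T)"
proof -
  have "tensorOp N (Omega psi lam) kdelta = (\<lambda>i j. \<Sum>T\<in>Pow {..<Suc N}. complex_of_real (\<Prod>t\<in>T. cp N lam t) * Eop psi (Suc N) T i j)"
  proof (intro ext)
    fix i j
    have "tensorOp N (Omega psi lam) kdelta i j = (\<Prod>t<Suc N. proj psi (i!t) (j!t) + complex_of_real (cp N lam t) * Qop psi (i!t) (j!t))"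
      unfolding tensorOp_prod by (rule prod.cong) (auto simp: cp_def Omega_def Qop_def)
    then show "tensorOp N (Omega psi lam) kdelta i j = (\<Sum>T\<in>Pow {..<Suc N}. complex_of_real (\<Prod>t\<in>T. cp N lam t) * Eop psi (Suc N) T i j)"
      by (simp add: expand)
  qed
  then show ?thesis
    unfolding pval_def wT_def Suc_eq_plus1[symmetric]
    by (simp only: trprod_sum[OF finite_Pow_iff[THEN iffD2, OF finite_lessThan]] Re_sum_of_real)
qed

lemma fval_expand:
  "fval D N psi lam rho = (\<Sum>T\<in>Pow {..<Suc N}. (\<Prod>t\<in>T. cf N lam t) * wT D (Suc N) psi rho T)"
proof -
  have "tensorOp N (Omega psi lam) (proj psi) = (\<lambda>i j. \<Sum>T\<in>Pow {..<Suc N}. complex_of_real (\<Prod>t\<in>T. cf N lam t) * Eop psi (Suc N) T i j)"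
  proof (intro ext)
    fix i j
    have "tensorOp N (Omega psi lam) (proj psi) i j = (\<Prod>t<Suc N. proj psi (i!t) (j!t) + complex_of_real (cf N lam t) * Qop psi (i!t) (j!t))"
      unfolding tensorOp_prod by (rule prod.cong) (auto simp: cf_def Omega_def Qop_def)
    then show "tensorOp N (Omega psi lam) (proj psi) i j = (\<Sum>T\<in>Pow {..<Suc N}. complex_of_real (\<Prod>t\<in>T. cf N lam t) * Eop psi (Suc N) T i j)"
      by (simp add: expand)
  qed
  then show ?thesis
    unfolding fval_def wT_def Suc_eq_plus1[symmetric]
    by (simp only: trprod_sum[OF finite_Pow_iff[THEN iffD2, OF finite_lessThan]] Re_sum_of_real)
qed

lemma kdelta_prod:
  assumes "i \<in> idx D n" "j \<in> idx D n"
  shows "(\<Prod>t<n. kdelta (i!t) (j!t)) = (if i = j then 1 else 0)"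
proof (cases "i = j")
  case True then show ?thesis by (simp add: kdelta_def)
next
  case False
  have "length i = n" "length j = n" using assms by (auto simp: idx_def)
  with False obtain t where "t < n" "i!t \<noteq> j!t" using nth_equalityI by metis
  then show ?thesis using False by (auto simp: kdelta_def intro!: prod_zero)
qed

lemma trace_expand:
  assumes "density_op D n rho"
  shows "(\<Sum>T\<in>Pow {..<n}. wT D n psi rho T) = 1"
proof -
  have e: "(\<lambda>i j. \<Prod>t<n. kdelta (i!t) (j!t)) = (\<lambda>i j. \<Sum>T\<in>Pow {..<n}. complex_of_real (\<Prod>t\<in>T. 1) * Eop psi n T i j)"
  proof (intro ext)
    fix i j
    have "(\<Prod>t<n. kdelta (i!t) (j!t)) = (\<Prod>t<n. proj psi (i!t) (j!t) + complex_of_real 1 * Qop psi (i!t) (j!t))"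
      by (simp add: Qop_def)
    also have "\<dots> = (\<Sum>T\<in>Pow {..<n}. complex_of_real (\<Prod>t\<in>T. 1) * Eop psi n T i j)"
      by (rule expand)
    finally show "(\<Prod>t<n. kdelta (i!t) (j!t)) = (\<Sum>T\<in>Pow {..<n}. complex_of_real (\<Prod>t\<in>T. 1) * Eop psi n T i j)" .
  qed
  have "trprod D n (\<lambda>i j. \<Prod>t<n. kdelta (i!t) (j!t)) rho = (\<Sum>i\<in>idx D n. rho i i)"
    unfolding trprod_def
  proof (rule sum.cong[OF refl])
    fix i assume i: "i \<in> idx D n"
    have "(\<Sum>j\<in>idx D n. (\<Prod>t<n. kdelta (i!t) (j!t)) * rho j i) = (\<Sum>j\<in>idx D n. if j = i then rho j i else 0)"
    proof (rule sum.cong[OF refl])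
      fix j assume j: "j \<in> idx D n"
      show "(\<Prod>t<n. kdelta (i!t) (j!t)) * rho j i = (if j = i then rho j i else 0)"
        unfolding kdelta_prod[OF i j] by auto
    qed
    also have "\<dots> = rho i i" using i by (simp only: sum.delta[OF finite_idx] if_True)
    finally show "(\<Sum>j\<in>idx D n. (\<Prod>t<n. kdelta (i!t) (j!t)) * rho j i) = rho i i" .
  qed
  also have "\<dots> = 1" using assms[unfolded density_op_def] by (rule conjunct2[THEN conjunct2])
  finally have "trprod D n (\<lambda>i j. \<Prod>t<n. kdelta (i!t) (j!t)) rho = 1" .
  then have "Re (trprod D n (\<lambda>i j. \<Sum>T\<in>Pow {..<n}. complex_of_real (\<Prod>t\<in>T. 1) * Eop psi n T i j) rho) = 1"
    by (simp only: e) simp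
  then have "(\<Sum>T\<in>Pow {..<n}. (\<Prod>t\<in>T. 1) * wT D n psi rho T) = 1" unfolding wT_def
    by (simp only: trprod_sum[OF finite_Pow_iff[THEN iffD2, OF finite_lessThan]] Re_sum_of_real)
  then show ?thesis by (simp only: prod.neutral_const mult_1)
qed


lemma kd_sum1: "a < D \<Longrightarrow> (\<Sum>c<D. kdelta a c * f c) = f a"
  by (simp add: kdelta_def if_distrib[of "\<lambda>x. x * _"] cong: if_cong)

lemma kd_sum2: "b < D \<Longrightarrow> (\<Sum>c<D. f c * kdelta c b) = f b"
  by (simp add: kdelta_def if_distrib[of "\<lambda>x. _ * x"] cong: if_cong)

lemma proj_idem:
  assumes nrm: "(\<Sum>c<D. psi c * cnj (psi c)) = 1"
  shows "(\<Sum>c<D. proj psi a c * proj psi c b) = proj psi a b"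
proof -
  have "(\<Sum>c<D. proj psi a c * proj psi c b) = (psi a * cnj (psi b)) * (\<Sum>c<D. psi c * cnj (psi c))"
    unfolding proj_def sum_distrib_left by (rule sum.cong) (auto simp: ac_simps)
  then show ?thesis using nrm by (simp add: proj_def)
qed

lemma Rop_idem:
  assumes nrm: "(\<Sum>c<D. psi c * cnj (psi c)) = 1" and ab: "a < D" "b < D"
  shows "(\<Sum>c<D. Rop psi T t a c * Rop psi T t c b) = Rop psi T t a b"
proof (cases "t \<in> T")
  case False
  then show ?thesis unfolding Rop_def using proj_idem[OF nrm] by simp
next
  case True
  have "(\<Sum>c<D. Qop psi a c * Qop psi c b)
     = (\<Sum>c<D. kdelta a c * kdelta c b) - (\<Sum>c<D. kdelta a c * proj psi c b)
       - (\<Sum>c<D. proj psi a c * kdelta c b) + (\<Sum>c<D. proj psi a c * proj psi c b)"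
    unfolding Qop_def by (simp add: algebra_simps sum_subtractf sum.distrib)
  also have "\<dots> = kdelta a b - proj psi a b - proj psi a b + proj psi a b"
    using ab by (simp add: kd_sum1 kd_sum2 proj_idem[OF nrm])
  finally show ?thesis using True unfolding Rop_def Qop_def by simp
qed

lemma Eop_idem:
  assumes nrm: "(\<Sum>c<D. psi c * cnj (psi c)) = 1" and ij: "i \<in> idx D n" "j \<in> idx D n"
  shows "(\<Sum>k\<in>idx D n. Eop psi n T i k * Eop psi n T k j) = Eop psi n T i j"
proof -
  have "(\<Sum>k\<in>idx D n. Eop psi n T i k * Eop psi n T k j)
      = (\<Sum>k\<in>idx D n. \<Prod>t<n. Rop psi T t (i!t) (k!t) * Rop psi T t (k!t) (j!t))"
    unfolding Eop_def by (simp add: prod.distrib)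
  also have "\<dots> = (\<Prod>t<n. \<Sum>c<D. Rop psi T t (i!t) c * Rop psi T t c (j!t))"
    by (rule sum_idx_prod)
  also have "\<dots> = Eop psi n T i j"
    unfolding Eop_def
  proof (rule prod.cong[OF refl])
    fix t assume "t \<in> {..<n}"
    then have "i!t \<in> set i" "j!t \<in> set j" using ij by (auto simp: idx_def)
    then have "i!t < D" "j!t < D" using ij by (auto simp: idx_def)
    then show "(\<Sum>c<D. Rop psi T t (i!t) c * Rop psi T t c (j!t)) = Rop psi T t (i!t) (j!t)"
      by (rule Rop_idem[OF nrm])
  qed
  finally show ?thesis .
qed

lemma Eop_herm: "Eop psi n T k j = cnj (Eop psi n T j k)"
  unfolding Eop_def cnj_prod
  by (rule prod.cong) (auto simp: Rop_def Qop_def proj_def kdelta_def mult.commute)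

lemma wT_nonneg:
  assumes dens: "density_op D n rho" and nrm: "(\<Sum>c<D. psi c * cnj (psi c)) = 1"
  shows "0 \<le> wT D n psi rho T"
proof -
  let ?E = "Eop psi n T"
  let ?I = "idx D n"
  have "trprod D n ?E rho = (\<Sum>i\<in>?I. \<Sum>j\<in>?I. (\<Sum>k\<in>?I. ?E i k * cnj (?E j k)) * rho j i)"
    unfolding trprod_def
  proof (intro sum.cong refl)
    fix i j assume ij: "i \<in> ?I" "j \<in> ?I"
    have "(\<Sum>k\<in>?I. ?E i k * cnj (?E j k)) = (\<Sum>k\<in>?I. ?E i k * ?E k j)"
      by (rule sum.cong[OF refl]) (simp only: Eop_herm[of psi n T _ j])
    also have "\<dots> = ?E i j" by (rule Eop_idem[OF nrm ij])
    finally show "?E i j * rho j i = (\<Sum>k\<in>?I. ?E i k * cnj (?E j k)) * rho j i" by simp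
  qed
  also have "\<dots> = (\<Sum>i\<in>?I. \<Sum>j\<in>?I. \<Sum>k\<in>?I. ?E i k * cnj (?E j k) * rho j i)"
    by (simp add: sum_distrib_right)
  also have "\<dots> = (\<Sum>i\<in>?I. \<Sum>k\<in>?I. \<Sum>j\<in>?I. ?E i k * cnj (?E j k) * rho j i)"
    by (rule sum.cong[OF refl]) (rule sum.swap)
  also have "\<dots> = (\<Sum>k\<in>?I. \<Sum>i\<in>?I. \<Sum>j\<in>?I. ?E i k * cnj (?E j k) * rho j i)"
    by (rule sum.swap)
  also have "\<dots> = (\<Sum>k\<in>?I. \<Sum>j\<in>?I. \<Sum>i\<in>?I. cnj (?E j k) * rho j i * ?E i k)"
    by (rule sum.cong[OF refl]) (subst sum.swap, simp add: ac_simps)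
  finally have eq: "trprod D n ?E rho = (\<Sum>k\<in>?I. \<Sum>j\<in>?I. \<Sum>i\<in>?I. cnj (?E j k) * rho j i * ?E i k)" .
  have pos: "\<forall>v :: nat list \<Rightarrow> complex. 0 \<le> Re (\<Sum>i\<in>?I. \<Sum>j\<in>?I. cnj (v i) * rho i j * v j)"
    using dens[unfolded density_op_def] by (rule conjunct1[OF conjunct2])
  have "0 \<le> (\<Sum>k\<in>?I. Re (\<Sum>j\<in>?I. \<Sum>i\<in>?I. cnj (?E j k) * rho j i * ?E i k))"
  proof (rule sum_nonneg)
    fix k show "0 \<le> Re (\<Sum>j\<in>?I. \<Sum>i\<in>?I. cnj (?E j k) * rho j i * ?E i k)"
      using pos[rule_format, of "\<lambda>x. ?E x k"] by simp
  qed
  then show ?thesis unfolding wT_def eq by (simp add: Re_sum)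
qed


lemma permute_idx_length [simp]: "length (permute_idx s xs) = length xs"
  by (simp add: permute_idx_def)

lemma permute_idx_nth [simp]: "t < length xs \<Longrightarrow> permute_idx s xs ! t = xs ! s t"
  by (simp add: permute_idx_def)

lemma permute_idx_in:
  assumes s: "s permutes {..<n}" and xs: "xs \<in> idx D n"
  shows "permute_idx s xs \<in> idx D n"
proof -
  have len: "length xs = n" using xs by (simp add: idx_def)
  have "set (permute_idx s xs) \<subseteq> {..<D}"
  proof
    fix x assume "x \<in> set (permute_idx s xs)"
    then obtain t where t: "t < n" "x = xs ! s t" using len by (auto simp: in_set_conv_nth)
    have "s t < n" using permutes_in_image[OF s] t(1) by simp
    then have "xs ! s t \<in> set xs" using len by simp
    then show "x \<in> {..<D}" using xs t(2) by (auto simp: idx_def)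
  qed
  then show ?thesis using len by (simp add: idx_def)
qed

lemma permute_idx_comp:
  assumes s: "s permutes {..<n}" and len: "length xs = n"
  shows "permute_idx s (permute_idx r xs) = permute_idx (r \<circ> s) xs"
proof (rule nth_equalityI)
  show "length (permute_idx s (permute_idx r xs)) = length (permute_idx (r \<circ> s) xs)" by simp
next
  fix t assume "t < length (permute_idx s (permute_idx r xs))"
  then have t: "t < n" using len by simp
  have "s t < n" using permutes_in_image[OF s] t by simp
  then show "permute_idx s (permute_idx r xs) ! t = permute_idx (r \<circ> s) xs ! t"
    using t len by simp
qed

lemma permute_idx_id: "permute_idx id xs = xs"
  by (simp add: permute_idx_def map_nth)

lemma permute_idx_bij:
  assumes s: "s permutes {..<n}"
  shows "bij_betw (permute_idx s) (idx D n) (idx D n)"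
proof (rule bij_betwI[where g = "permute_idx (inv s)"])
  have si: "inv s permutes {..<n}" using permutes_inv[OF s] .
  show "permute_idx s \<in> idx D n \<rightarrow> idx D n" using permute_idx_in[OF s] by blast
  show "permute_idx (inv s) \<in> idx D n \<rightarrow> idx D n" using permute_idx_in[OF si] by blast
  fix x assume x: "x \<in> idx D n"
  then have len: "length x = n" by (simp add: idx_def)
  show "permute_idx (inv s) (permute_idx s x) = x"
    using permute_idx_comp[OF si len, of s] permutes_inv_o(1)[OF s] by (simp add: permute_idx_id)
next
  fix y assume y: "y \<in> idx D n"
  then have len: "length y = n" by (simp add: idx_def)
  have si: "inv s permutes {..<n}" using permutes_inv[OF s] .
  show "permute_idx s (permute_idx (inv s) y) = y"
    using permute_idx_comp[OF s len, of "inv s"] permutes_inv_o(2)[OF s] by (simp add: permute_idx_id)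
qed

lemma prod_perm_pattern:
  assumes s: "s permutes {..<n}"
  shows "(\<Prod>t<n. if t \<in> T then Fa (s t) else Fb (s t))
       = (\<Prod>t<n. if t \<in> s ` T then Fa t else (Fb t :: 'a::comm_monoid_mult))"
proof -
  have inj: "inj s" using permutes_inj[OF s] .
  have "(\<Prod>t<n. if t \<in> s ` T then Fa t else Fb t)
      = (\<Prod>t<n. if s t \<in> s ` T then Fa (s t) else Fb (s t))"
    using prod.permute[OF s, of "\<lambda>t. if t \<in> s ` T then Fa t else Fb t"] by (simp add: comp_def)
  also have "\<dots> = (\<Prod>t<n. if t \<in> T then Fa (s t) else Fb (s t))"
    using inj by (simp add: inj_image_mem_iff)
  finally show ?thesis by simp
qed

lemma Eop_permute:
  assumes s: "s permutes {..<n}" and i: "i \<in> idx D n" and j: "j \<in> idx D n"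
  shows "Eop psi n T (permute_idx s i) (permute_idx s j) = Eop psi n (s ` T) i j"
proof -
  have li: "length i = n" and lj: "length j = n" using i j by (auto simp: idx_def)
  have "Eop psi n T (permute_idx s i) (permute_idx s j)
      = (\<Prod>t<n. if t \<in> T then Qop psi (i ! s t) (j ! s t) else proj psi (i ! s t) (j ! s t))"
    unfolding Eop_def Rop_def by (rule prod.cong) (auto simp: li lj)
  also have "\<dots> = (\<Prod>t<n. if t \<in> s ` T then Qop psi (i ! t) (j ! t) else proj psi (i ! t) (j ! t))"
    by (rule prod_perm_pattern[OF s, where Fa = "\<lambda>t. Qop psi (i ! t) (j ! t)" and Fb = "\<lambda>t. proj psi (i ! t) (j ! t)"])
  also have "\<dots> = Eop psi n (s ` T) i j"
    unfolding Eop_def Rop_def by (rule prod.cong) auto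
  finally show ?thesis .
qed

lemma wT_perm:
  assumes s: "s permutes {..<n}" and pinv: "perm_inv D n rho"
  shows "wT D n psi rho (s ` T) = wT D n psi rho T"
proof -
  let ?p = "permute_idx s"
  have bij: "bij_betw ?p (idx D n) (idx D n)" by (rule permute_idx_bij[OF s])
  have "trprod D n (Eop psi n T) rho = (\<Sum>i\<in>idx D n. \<Sum>j\<in>idx D n. Eop psi n T i j * rho j i)"
    by (simp add: trprod_def)
  also have "\<dots> = (\<Sum>i\<in>idx D n. \<Sum>j\<in>idx D n. Eop psi n T (?p i) j * rho j (?p i))"
    by (rule sum.reindex_bij_betw[OF bij, symmetric])
  also have "\<dots> = (\<Sum>i\<in>idx D n. \<Sum>j\<in>idx D n. Eop psi n T (?p i) (?p j) * rho (?p j) (?p i))"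
    by (rule sum.cong[OF refl]) (rule sum.reindex_bij_betw[OF bij, symmetric])
  also have "\<dots> = (\<Sum>i\<in>idx D n. \<Sum>j\<in>idx D n. Eop psi n (s ` T) i j * rho j i)"
  proof (intro sum.cong refl)
    fix i j assume i: "i \<in> idx D n" and j: "j \<in> idx D n"
    have "rho (?p j) (?p i) = rho j i" using pinv s i j unfolding perm_inv_def by blast
    then show "Eop psi n T (?p i) (?p j) * rho (?p j) (?p i) = Eop psi n (s ` T) i j * rho j i"
      by (simp add: Eop_permute[OF s i j])
  qed
  also have "\<dots> = trprod D n (Eop psi n (s ` T)) rho" by (simp add: trprod_def)
  finally show ?thesis unfolding wT_def by simp
qed


lemma image_Pow_bij:
  assumes s: "s permutes A"
  shows "bij_betw ((`) s) (Pow A) (Pow A)"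
proof (rule bij_betwI[where g = "(`) (inv s)"])
  have si: "inv s permutes A" using permutes_inv[OF s] .
  show "(`) s \<in> Pow A \<rightarrow> Pow A" using permutes_image[OF s] by auto
  show "(`) (inv s) \<in> Pow A \<rightarrow> Pow A" using permutes_image[OF si] by auto
  fix x show "inv s ` s ` x = x" using permutes_inv_o(2)[OF s] by (simp add: image_comp)
next
  fix y show "s ` inv s ` y = y" using permutes_inv_o(1)[OF s] by (simp add: image_comp)
qed

lemma double_count:
  fixes w :: "nat set \<Rightarrow> real" and G :: "nat \<Rightarrow> nat set \<Rightarrow> real"
  assumes sym: "\<And>r T. r permutes {..<n} \<Longrightarrow> w (r ` T) = w T"
    and s0: "s0 < n"
    and G: "\<And>s T. s < n \<Longrightarrow> T \<subseteq> {..<n} \<Longrightarrow> G s0 (transpose s s0 ` T) = G s T"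
  shows "real n * (\<Sum>T\<in>Pow {..<n}. w T * G s0 T) = (\<Sum>T\<in>Pow {..<n}. w T * (\<Sum>s<n. G s T))"
proof -
  have each: "(\<Sum>T\<in>Pow {..<n}. w T * G s T) = (\<Sum>T\<in>Pow {..<n}. w T * G s0 T)" if s: "s < n" for s
  proof -
    let ?r = "transpose s s0"
    have r: "?r permutes {..<n}" using s s0 by (intro permutes_swap_id) auto
    have "(\<Sum>T\<in>Pow {..<n}. w T * G s T) = (\<Sum>T\<in>Pow {..<n}. w (?r ` T) * G s0 (?r ` T))"
      by (rule sum.cong[OF refl]) (simp add: sym[OF r] G[OF s])
    also have "\<dots> = (\<Sum>T\<in>Pow {..<n}. w T * G s0 T)"
      by (rule sum.reindex_bij_betw[OF image_Pow_bij[OF r], where g = "\<lambda>T. w T * G s0 T"])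
    finally show ?thesis .
  qed
  have "(\<Sum>T\<in>Pow {..<n}. w T * (\<Sum>s<n. G s T)) = (\<Sum>s<n. \<Sum>T\<in>Pow {..<n}. w T * G s T)"
    by (simp add: sum_distrib_left sum.swap[of _ "Pow {..<n}"])
  also have "\<dots> = (\<Sum>s<n. \<Sum>T\<in>Pow {..<n}. w T * G s0 T)"
    by (rule sum.cong[OF refl]) (simp add: each)
  finally show ?thesis by simp
qed

lemma transpose_hit: "transpose s s0 t = s0 \<longleftrightarrow> t = s"
  by (auto simp: transpose_eq_iff)

lemma G_transpose:
  fixes c :: "nat \<Rightarrow> nat \<Rightarrow> real"
  assumes c: "\<And>s t. c s t = (if t = s then x else y)"
  shows "(\<Prod>t\<in>transpose s s0 ` T. c s0 t) = (\<Prod>t\<in>T. c s t)"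
proof -
  have "(\<Prod>t\<in>transpose s s0 ` T. c s0 t) = (\<Prod>t\<in>T. c s0 (transpose s s0 t))"
    using prod.reindex[where h = "transpose s s0" and A = T and g = "c s0"] by (simp add: comp_def)
  also have "\<dots> = (\<Prod>t\<in>T. c s t)"
    by (rule prod.cong[OF refl]) (simp add: c transpose_hit)
  finally show ?thesis .
qed

lemma sum_if_card:
  fixes x y :: real
  assumes T: "T \<subseteq> {..<n}"
  shows "(\<Sum>s<n. if s \<in> T then x else y) = real (card T) * x + real (n - card T) * y"
proof -
  have fT: "finite T" using T finite_subset by blast
  have "(\<Sum>s<n. if s \<in> T then x else y) = (\<Sum>s\<in>{..<n} \<inter> {s. s \<in> T}. x) + (\<Sum>s\<in>{..<n} \<inter> - {s. s \<in> T}. y)"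
    by (rule sum.If_cases) simp
  also have "{..<n} \<inter> {s. s \<in> T} = T" using T by auto
  also have "{..<n} \<inter> - {s. s \<in> T} = {..<n} - T" by auto
  finally have eq: "(\<Sum>s<n. if s \<in> T then x else y) = (\<Sum>s\<in>T. x) + (\<Sum>s\<in>{..<n} - T. y)" .
  have "card ({..<n} - T) = n - card T" using T fT by (simp add: card_Diff_subset)
  then show ?thesis using eq by simp
qed

lemma prod_delta_card:
  fixes x y :: real
  assumes "finite T"
  shows "(\<Prod>t\<in>T. if t = s then x else y) = (if s \<in> T then x * y ^ (card T - 1) else y ^ card T)"
  using prod_gen_delta[OF assms, of s "\<lambda>_. x" y] by simp

definition gk :: "nat \<Rightarrow> real \<Rightarrow> nat \<Rightarrow> real" where
  "gk n lam k = real k * lam ^ (k - 1) + real (n - k) * lam ^ k"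
definition hk :: "nat \<Rightarrow> real \<Rightarrow> nat \<Rightarrow> real" where
  "hk n lam k = real (n - k) * lam ^ k"

lemma sum_cp: "T \<subseteq> {..<n} \<Longrightarrow> (\<Sum>s<n. \<Prod>t\<in>T. cp s lam t) = gk n lam (card T)"
proof -
  assume T: "T \<subseteq> {..<n}"
  have fT: "finite T" using T finite_subset by blast
  have "(\<Sum>s<n. \<Prod>t\<in>T. cp s lam t) = (\<Sum>s<n. if s \<in> T then lam ^ (card T - 1) else lam ^ card T)"
    unfolding cp_def prod_delta_card[OF fT] by (simp only: mult_1)
  also have "\<dots> = gk n lam (card T)" using sum_if_card[OF T] by (simp add: gk_def)
  finally show ?thesis .
qed

lemma sum_cf: "T \<subseteq> {..<n} \<Longrightarrow> (\<Sum>s<n. \<Prod>t\<in>T. cf s lam t) = hk n lam (card T)"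
proof -
  assume T: "T \<subseteq> {..<n}"
  have fT: "finite T" using T finite_subset by blast
  have "(\<Sum>s<n. \<Prod>t\<in>T. cf s lam t) = (\<Sum>s<n. if s \<in> T then 0 else lam ^ card T)"
    unfolding cf_def prod_delta_card[OF fT] by (simp only: mult_zero_left)
  also have "\<dots> = hk n lam (card T)" using sum_if_card[OF T] by (simp add: hk_def)
  finally show ?thesis .
qed

lemma pval_count:
  assumes pinv: "perm_inv D (Suc N) rho"
  shows "real (Suc N) * pval D N psi lam rho
     = (\<Sum>T\<in>Pow {..<Suc N}. wT D (Suc N) psi rho T * gk (Suc N) lam (card T))"
proof -
  have "real (Suc N) * pval D N psi lam rho
     = real (Suc N) * (\<Sum>T\<in>Pow {..<Suc N}. wT D (Suc N) psi rho T * (\<Prod>t\<in>T. cp N lam t))"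
    by (simp add: pval_expand mult.commute)
  also have "\<dots> = (\<Sum>T\<in>Pow {..<Suc N}. wT D (Suc N) psi rho T * (\<Sum>s<Suc N. \<Prod>t\<in>T. cp s lam t))"
    by (rule double_count[where G = "\<lambda>s T. \<Prod>t\<in>T. cp s lam t"])
       (auto intro: wT_perm[OF _ pinv] G_transpose[where x = 1 and y = lam] simp: cp_def)
  also have "\<dots> = (\<Sum>T\<in>Pow {..<Suc N}. wT D (Suc N) psi rho T * gk (Suc N) lam (card T))"
  proof (rule sum.cong[OF refl])
    fix T assume "T \<in> Pow {..<Suc N}"
    then have T: "T \<subseteq> {..<Suc N}" by simp
    show "wT D (Suc N) psi rho T * (\<Sum>s<Suc N. \<Prod>t\<in>T. cp s lam t) = wT D (Suc N) psi rho T * gk (Suc N) lam (card T)"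
      by (simp only: sum_cp[OF T])
  qed
  finally show ?thesis .
qed

lemma fval_count:
  assumes pinv: "perm_inv D (Suc N) rho"
  shows "real (Suc N) * fval D N psi lam rho
     = (\<Sum>T\<in>Pow {..<Suc N}. wT D (Suc N) psi rho T * hk (Suc N) lam (card T))"
proof -
  have "real (Suc N) * fval D N psi lam rho
     = real (Suc N) * (\<Sum>T\<in>Pow {..<Suc N}. wT D (Suc N) psi rho T * (\<Prod>t\<in>T. cf N lam t))"
    by (simp add: fval_expand mult.commute)
  also have "\<dots> = (\<Sum>T\<in>Pow {..<Suc N}. wT D (Suc N) psi rho T * (\<Sum>s<Suc N. \<Prod>t\<in>T. cf s lam t))"
    by (rule double_count[where G = "\<lambda>s T. \<Prod>t\<in>T. cf s lam t"])
       (auto intro: wT_perm[OF _ pinv] G_transpose[where x = 0 and y = lam] simp: cf_def)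
  also have "\<dots> = (\<Sum>T\<in>Pow {..<Suc N}. wT D (Suc N) psi rho T * hk (Suc N) lam (card T))"
  proof (rule sum.cong[OF refl])
    fix T assume "T \<in> Pow {..<Suc N}"
    then have T: "T \<subseteq> {..<Suc N}" by simp
    show "wT D (Suc N) psi rho T * (\<Sum>s<Suc N. \<Prod>t\<in>T. cf s lam t) = wT D (Suc N) psi rho T * hk (Suc N) lam (card T)"
      by (simp only: sum_cf[OF T])
  qed
  finally show ?thesis .
qed

definition Dm :: "nat \<Rightarrow> real \<Rightarrow> nat \<Rightarrow> real" where
  "Dm N lam m = (1 - lam) * (real m * (1 - lam) + real N * lam)"
definition bco :: "nat \<Rightarrow> real \<Rightarrow> nat \<Rightarrow> real" where
  "bco N lam m = lam * (1 + (real N - real m) * (1 - lam)) / Dm N lam m"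
definition aco :: "nat \<Rightarrow> real \<Rightarrow> nat \<Rightarrow> real" where
  "aco N lam m = - (lam ^ (m + 1)) / Dm N lam m"

lemma key_ineq:
  fixes lam :: real
  assumes l0: "0 < lam" and l1: "lam < 1"
  shows "lam ^ k * (lam + (1 - lam) * (real k - real m)) \<le> lam ^ (m + 1)"
proof (cases "k \<le> m")
  case True
  define i where "i = m - k"
  have m: "m = k + i" using True i_def by simp
  have b: "1 + real (i + 1) * (- (1 - lam)) \<le> (1 + (- (1 - lam))) ^ (i + 1)"
    by (rule Bernoulli_inequality) (use l0 l1 in simp)
  have "lam + (1 - lam) * (real k - real m) \<le> lam ^ (i + 1)"
    using b by (simp add: m algebra_simps)
  then have "lam ^ k * (lam + (1 - lam) * (real k - real m)) \<le> lam ^ k * lam ^ (i + 1)"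
    by (rule mult_left_mono) (use l0 in simp)
  also have "\<dots> = lam ^ (m + 1)" by (simp add: m power_add)
  finally show ?thesis .
next
  case False
  define i where "i = k - (m + 1)"
  have k: "k = m + 1 + i" using False i_def by simp
  have b: "1 + real i * (1 - lam) \<le> (1 + (1 - lam)) ^ i"
    by (rule Bernoulli_inequality) (use l0 l1 in simp)
  have "lam ^ i * (1 + real i * (1 - lam)) \<le> lam ^ i * (1 + (1 - lam)) ^ i"
    by (rule mult_left_mono[OF b]) (use l0 in simp)
  also have "\<dots> = (lam * (2 - lam)) ^ i" by (simp add: power_mult_distrib)
  also have "\<dots> \<le> 1"
  proof (rule power_le_one)
    show "0 \<le> lam * (2 - lam)" using l0 l1 by simp
    have "0 \<le> (1 - lam) ^ 2" by simp
    then show "lam * (2 - lam) \<le> 1" by (simp add: power2_eq_square algebra_simps)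
  qed
  finally have c: "lam ^ i * (1 + real i * (1 - lam)) \<le> 1" .
  have "lam ^ k * (lam + (1 - lam) * (real k - real m)) = lam ^ (m + 1) * (lam ^ i * (1 + real i * (1 - lam)))"
    by (simp add: k power_add algebra_simps)
  also have "\<dots> \<le> lam ^ (m + 1) * 1"
    by (rule mult_left_mono[OF c]) (use l0 in simp)
  finally show ?thesis by simp
qed

lemma Dm_pos:
  assumes "0 < lam" "lam < 1" "1 \<le> N"
  shows "0 < Dm N lam m"
proof -
  have "0 < real m * (1 - lam) + real N * lam" using assms
    by (intro add_nonneg_pos) auto
  then show ?thesis using assms unfolding Dm_def by simp
qed

lemma lam_gk:
  assumes "k \<le> n"
  shows "lam * gk n lam k = lam ^ k * ((real n - real k) * lam + real k)"
proof (cases k)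
  case 0 then show ?thesis by (simp add: gk_def)
next
  case (Suc j)
  then show ?thesis using assms by (simp add: gk_def algebra_simps of_nat_diff)
qed

lemma lp_identity:
  assumes l0: "0 < lam" and l1: "lam < 1" and N: "1 \<le> N" and k: "k \<le> Suc N"
  shows "hk (Suc N) lam k - bco N lam m * gk (Suc N) lam k - real (Suc N) * aco N lam m
       = real (Suc N) * (lam ^ (m + 1) - lam ^ k * (lam + (1 - lam) * (real k - real m))) / Dm N lam m"
proof -
  let ?D = "Dm N lam m"
  let ?L = "lam ^ k"
  let ?x = "real k"
  have D: "0 < ?D" by (rule Dm_pos[OF l0 l1 N])
  have g: "gk (Suc N) lam k = ?L * ((real N + 1 - ?x) * lam + ?x) / lam"
    using lam_gk[OF k, of lam] l0 by (simp add: field_simps)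
  have h: "hk (Suc N) lam k = (real N + 1 - ?x) * ?L"
    using k by (simp add: hk_def of_nat_diff)
  have poly: "?D * (real N + 1 - ?x) - (1 + (real N - real m) * (1 - lam)) * ((real N + 1 - ?x) * lam + ?x)
      = - (real N + 1) * (lam + (1 - lam) * (?x - real m))"
    unfolding Dm_def by (simp add: algebra_simps)
  have "(hk (Suc N) lam k - bco N lam m * gk (Suc N) lam k - real (Suc N) * aco N lam m) * ?D
      = ?L * (?D * (real N + 1 - ?x) - (1 + (real N - real m) * (1 - lam)) * ((real N + 1 - ?x) * lam + ?x))
        + (real N + 1) * lam ^ (m + 1)"
    unfolding g h bco_def aco_def using D l0 by (simp add: field_simps)
  also have "\<dots> = real (Suc N) * (lam ^ (m + 1) - ?L * (lam + (1 - lam) * (?x - real m)))"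
    unfolding poly by (simp add: algebra_simps)
  finally show ?thesis using D by (simp add: field_simps)
qed

lemma lp_ineq:
  assumes l0: "0 < lam" and l1: "lam < 1" and N: "1 \<le> N" and k: "k \<le> Suc N"
  shows "0 \<le> hk (Suc N) lam k - bco N lam m * gk (Suc N) lam k - real (Suc N) * aco N lam m"
  unfolding lp_identity[OF assms]
  using key_ineq[OF l0 l1, of k m] Dm_pos[OF l0 l1 N, of m] by simp

lemma lp_eq:
  assumes l0: "0 < lam" and l1: "lam < 1" and N: "1 \<le> N" and k: "k \<le> Suc N" and km: "k = m \<or> k = m + 1"
  shows "hk (Suc N) lam k - bco N lam m * gk (Suc N) lam k - real (Suc N) * aco N lam m = 0"
  unfolding lp_identity[OF l0 l1 N k] using km by (auto simp: algebra_simps)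


definition chi :: "(nat \<Rightarrow> complex) \<Rightarrow> (nat \<Rightarrow> complex) \<Rightarrow> nat set \<Rightarrow> nat \<Rightarrow> nat \<Rightarrow> complex" where
  "chi psi phi S t = (if t \<in> S then phi else psi)"
definition vec :: "(nat \<Rightarrow> complex) \<Rightarrow> (nat \<Rightarrow> complex) \<Rightarrow> nat \<Rightarrow> nat set \<Rightarrow> nat list \<Rightarrow> complex" where
  "vec psi phi n S i = (\<Prod>t<n. chi psi phi S t (i!t))"
definition rhoc :: "(nat \<Rightarrow> complex) \<Rightarrow> (nat \<Rightarrow> complex) \<Rightarrow> nat \<Rightarrow> (nat set \<Rightarrow> real) \<Rightarrow> nat list \<Rightarrow> nat list \<Rightarrow> complex" where
  "rhoc psi phi n c i j = (\<Sum>S\<in>Pow {..<n}. complex_of_real (c S) * vec psi phi n S i * cnj (vec psi phi n S j))"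

lemma rhoc_herm: "rhoc psi phi n c i j = cnj (rhoc psi phi n c j i)"
  unfolding rhoc_def by (simp add: ac_simps)

lemma rhoc_psd:
  assumes c: "\<And>S. 0 \<le> c S"
  shows "0 \<le> Re (\<Sum>i\<in>idx D n. \<Sum>j\<in>idx D n. cnj (v i) * rhoc psi phi n c i j * v j)"
proof -
  let ?z = "\<lambda>S. \<Sum>i\<in>idx D n. cnj (v i) * vec psi phi n S i"
  have "(\<Sum>i\<in>idx D n. \<Sum>j\<in>idx D n. cnj (v i) * rhoc psi phi n c i j * v j)
      = (\<Sum>i\<in>idx D n. \<Sum>j\<in>idx D n. \<Sum>S\<in>Pow {..<n}. complex_of_real (c S) * (cnj (v i) * vec psi phi n S i) * cnj (cnj (v j) * vec psi phi n S j))"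
    unfolding rhoc_def by (simp add: sum_distrib_left sum_distrib_right ac_simps)
  also have "\<dots> = (\<Sum>S\<in>Pow {..<n}. complex_of_real (c S) * (?z S * cnj (?z S)))"
    by (simp add: sum_distrib_left sum_distrib_right sum.swap[of _ "Pow {..<n}"] ac_simps)
  finally have eq: "(\<Sum>i\<in>idx D n. \<Sum>j\<in>idx D n. cnj (v i) * rhoc psi phi n c i j * v j)
     = (\<Sum>S\<in>Pow {..<n}. complex_of_real (c S) * (?z S * cnj (?z S)))" .
  have "0 \<le> (\<Sum>S\<in>Pow {..<n}. c S * (cmod (?z S))\<^sup>2)"
    using c by (intro sum_nonneg) simp
  also have "(\<Sum>S\<in>Pow {..<n}. c S * (cmod (?z S))\<^sup>2) = Re (\<Sum>S\<in>Pow {..<n}. complex_of_real (c S) * (?z S * cnj (?z S)))"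
    unfolding Re_sum
  proof (rule sum.cong[OF refl])
    fix S
    show "c S * (cmod (?z S))\<^sup>2 = Re (complex_of_real (c S) * (?z S * cnj (?z S)))"
      by (simp only: complex_norm_square[symmetric] of_real_mult[symmetric] Re_complex_of_real)
  qed
  finally show ?thesis unfolding eq .
qed

lemma vec_norm:
  assumes ps: "(\<Sum>a<D. psi a * cnj (psi a)) = 1" and ph: "(\<Sum>a<D. phi a * cnj (phi a)) = 1"
  shows "(\<Sum>i\<in>idx D n. vec psi phi n S i * cnj (vec psi phi n S i)) = 1"
proof -
  have "(\<Sum>i\<in>idx D n. vec psi phi n S i * cnj (vec psi phi n S i))
     = (\<Sum>i\<in>idx D n. \<Prod>t<n. chi psi phi S t (i!t) * cnj (chi psi phi S t (i!t)))"
    unfolding vec_def by (simp add: prod.distrib)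
  also have "\<dots> = (\<Prod>t<n. \<Sum>a<D. chi psi phi S t a * cnj (chi psi phi S t a))"
    by (rule sum_idx_prod)
  also have "\<dots> = 1" using ps ph by (intro prod.neutral) (simp add: chi_def)
  finally show ?thesis .
qed

lemma rhoc_trace:
  assumes ps: "(\<Sum>a<D. psi a * cnj (psi a)) = 1" and ph: "(\<Sum>a<D. phi a * cnj (phi a)) = 1"
    and csum: "(\<Sum>S\<in>Pow {..<n}. c S) = 1"
  shows "(\<Sum>i\<in>idx D n. rhoc psi phi n c i i) = 1"
proof -
  have "(\<Sum>i\<in>idx D n. rhoc psi phi n c i i)
      = (\<Sum>S\<in>Pow {..<n}. complex_of_real (c S) * (\<Sum>i\<in>idx D n. vec psi phi n S i * cnj (vec psi phi n S i)))"
    unfolding rhoc_def by (simp add: sum_distrib_left sum.swap[of _ "Pow {..<n}"] ac_simps)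
  also have "\<dots> = complex_of_real (\<Sum>S\<in>Pow {..<n}. c S)"
    by (simp add: vec_norm[OF ps ph])
  finally show ?thesis using csum by simp
qed

lemma rhoc_density:
  assumes ps: "(\<Sum>a<D. psi a * cnj (psi a)) = 1" and ph: "(\<Sum>a<D. phi a * cnj (phi a)) = 1"
    and c: "\<And>S. 0 \<le> c S" and csum: "(\<Sum>S\<in>Pow {..<n}. c S) = 1"
  shows "density_op D n (rhoc psi phi n c)"
  unfolding density_op_def
proof (intro conjI ballI allI)
  fix i j show "rhoc psi phi n c i j = cnj (rhoc psi phi n c j i)" by (rule rhoc_herm)
next
  fix v :: "nat list \<Rightarrow> complex"
  show "0 \<le> Re (\<Sum>i\<in>idx D n. \<Sum>j\<in>idx D n. cnj (v i) * rhoc psi phi n c i j * v j)"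
    by (rule rhoc_psd[OF c])
next
  show "(\<Sum>i\<in>idx D n. rhoc psi phi n c i i) = 1" by (rule rhoc_trace[OF ps ph csum])
qed

lemma vec_permute:
  assumes s: "s permutes {..<n}" and i: "i \<in> idx D n"
  shows "vec psi phi n S (permute_idx s i) = vec psi phi n (s ` S) i"
proof -
  have li: "length i = n" using i by (auto simp: idx_def)
  have "vec psi phi n S (permute_idx s i) = (\<Prod>t<n. if t \<in> S then phi (i ! s t) else psi (i ! s t))"
    unfolding vec_def chi_def by (rule prod.cong) (auto simp: li)
  also have "\<dots> = (\<Prod>t<n. if t \<in> s ` S then phi (i ! t) else psi (i ! t))"
    by (rule prod_perm_pattern[OF s, where Fa = "\<lambda>t. phi (i ! t)" and Fb = "\<lambda>t. psi (i ! t)"])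
  also have "\<dots> = vec psi phi n (s ` S) i"
    unfolding vec_def chi_def by (rule prod.cong) auto
  finally show ?thesis .
qed

lemma rhoc_perm_inv:
  assumes csym: "\<And>s S. s permutes {..<n} \<Longrightarrow> c (s ` S) = c S"
  shows "perm_inv D n (rhoc psi phi n c)"
  unfolding perm_inv_def
proof (intro allI impI ballI)
  fix s i j assume s: "s permutes {..<n}" and i: "i \<in> idx D n" and j: "j \<in> idx D n"
  have "rhoc psi phi n c (permute_idx s i) (permute_idx s j)
     = (\<Sum>S\<in>Pow {..<n}. complex_of_real (c (s ` S)) * vec psi phi n (s ` S) i * cnj (vec psi phi n (s ` S) j))"
    unfolding rhoc_def by (simp add: vec_permute[OF s i] vec_permute[OF s j] csym[OF s])
  also have "\<dots> = rhoc psi phi n c i j"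
    unfolding rhoc_def
    by (rule sum.reindex_bij_betw[OF image_Pow_bij[OF s], where g = "\<lambda>S. complex_of_real (c S) * vec psi phi n S i * cnj (vec psi phi n S j)"])
  finally show "rhoc psi phi n c (permute_idx s i) (permute_idx s j) = rhoc psi phi n c i j" .
qed


lemma ev_proj:
  "(\<Sum>a<D. \<Sum>b<D. proj psi a b * x b * cnj (x a))
     = (\<Sum>a<D. cnj (x a) * psi a) * (\<Sum>b<D. cnj (psi b) * x b)"
  unfolding sum_product proj_def by (intro sum.cong refl) (simp add: ac_simps)

lemma ev_kd:
  "(\<Sum>a<D. \<Sum>b<D. kdelta a b * x b * cnj (x a)) = (\<Sum>a<D. x a * cnj (x a))"
proof (rule sum.cong[OF refl])
  fix a assume "a \<in> {..<D}"
  then have a: "a < D" by simp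
  have "(\<Sum>b<D. kdelta a b * x b * cnj (x a)) = (\<Sum>b<D. kdelta a b * (x b * cnj (x a)))"
    by (simp add: mult.assoc)
  also have "\<dots> = x a * cnj (x a)" by (rule kd_sum1[OF a])
  finally show "(\<Sum>b<D. kdelta a b * x b * cnj (x a)) = x a * cnj (x a)" .
qed

lemma ev_Q:
  "(\<Sum>a<D. \<Sum>b<D. Qop psi a b * x b * cnj (x a))
    = (\<Sum>a<D. \<Sum>b<D. kdelta a b * x b * cnj (x a)) - (\<Sum>a<D. \<Sum>b<D. proj psi a b * x b * cnj (x a))"
  unfolding Qop_def by (simp add: algebra_simps sum_subtractf)

lemma factor_val:
  assumes ps: "(\<Sum>a<D. psi a * cnj (psi a)) = 1" and ph: "(\<Sum>a<D. phi a * cnj (phi a)) = 1"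
    and orth: "(\<Sum>a<D. cnj (phi a) * psi a) = 0"
  shows "(\<Sum>a<D. \<Sum>b<D. Rop psi T t a b * chi psi phi S t b * cnj (chi psi phi S t a))
       = (if (t \<in> T) = (t \<in> S) then 1 else 0)"
proof -
  have ps': "(\<Sum>a<D. cnj (psi a) * psi a) = 1" using ps by (simp add: mult.commute)
  have orth': "(\<Sum>b<D. cnj (psi b) * phi b) = 0"
  proof -
    have "(\<Sum>b<D. cnj (psi b) * phi b) = cnj (\<Sum>a<D. cnj (phi a) * psi a)" by (simp add: mult.commute)
    then show ?thesis using orth by simp
  qed
  have Ppsi: "(\<Sum>a<D. \<Sum>b<D. proj psi a b * psi b * cnj (psi a)) = 1"
    unfolding ev_proj ps' by simp
  have Pphi: "(\<Sum>a<D. \<Sum>b<D. proj psi a b * phi b * cnj (phi a)) = 0"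
    unfolding ev_proj orth by simp
  have Kpsi: "(\<Sum>a<D. \<Sum>b<D. kdelta a b * psi b * cnj (psi a)) = 1"
    unfolding ev_kd ps ..
  have Kphi: "(\<Sum>a<D. \<Sum>b<D. kdelta a b * phi b * cnj (phi a)) = 1"
    unfolding ev_kd ph ..
  show ?thesis
    by (cases "t \<in> T"; cases "t \<in> S") (simp_all add: Rop_def chi_def ev_Q Ppsi Pphi Kpsi Kphi)
qed

lemma wT_rhoc:
  assumes ps: "(\<Sum>a<D. psi a * cnj (psi a)) = 1" and ph: "(\<Sum>a<D. phi a * cnj (phi a)) = 1"
    and orth: "(\<Sum>a<D. cnj (phi a) * psi a) = 0" and T: "T \<subseteq> {..<n}"
  shows "wT D n psi (rhoc psi phi n c) T = c T"
proof -
  have inner: "(\<Sum>i\<in>idx D n. \<Sum>j\<in>idx D n. Eop psi n T i j * (vec psi phi n S j * cnj (vec psi phi n S i)))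
      = (if S = T then 1 else 0)" if S: "S \<subseteq> {..<n}" for S
  proof -
    have "(\<Sum>i\<in>idx D n. \<Sum>j\<in>idx D n. Eop psi n T i j * (vec psi phi n S j * cnj (vec psi phi n S i)))
       = (\<Sum>i\<in>idx D n. \<Sum>j\<in>idx D n. \<Prod>t<n. Rop psi T t (i!t) (j!t) * chi psi phi S t (j!t) * cnj (chi psi phi S t (i!t)))"
      unfolding Eop_def vec_def by (simp add: prod.distrib mult.assoc)
    also have "\<dots> = (\<Prod>t<n. \<Sum>a<D. \<Sum>b<D. Rop psi T t a b * chi psi phi S t b * cnj (chi psi phi S t a))"
      by (rule sum2_idx_prod)
    also have "\<dots> = (\<Prod>t<n. if (t \<in> T) = (t \<in> S) then 1 else 0)"
      by (simp add: factor_val[OF ps ph orth])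
    also have "\<dots> = (if S = T then 1 else 0)"
    proof (cases "S = T")
      case True then show ?thesis by simp
    next
      case False
      then obtain t where "(t \<in> S) \<noteq> (t \<in> T)" by blast
      moreover then have "t < n" using S T by auto
      ultimately show ?thesis using False by (auto intro!: prod_zero)
    qed
    finally show ?thesis .
  qed
  have "trprod D n (Eop psi n T) (rhoc psi phi n c)
     = (\<Sum>S\<in>Pow {..<n}. complex_of_real (c S) *
          (\<Sum>i\<in>idx D n. \<Sum>j\<in>idx D n. Eop psi n T i j * (vec psi phi n S j * cnj (vec psi phi n S i))))"
    unfolding trprod_def rhoc_def
    by (simp add: sum_distrib_left sum.swap[of _ "Pow {..<n}"] ac_simps)
  also have "\<dots> = (\<Sum>S\<in>Pow {..<n}. if S = T then complex_of_real (c S) else 0)"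
    by (rule sum.cong[OF refl]) (simp add: inner)
  also have "\<dots> = complex_of_real (c T)" using T by simp
  finally show ?thesis unfolding wT_def by simp
qed

lemma sum_card_pick:
  fixes G :: "nat \<Rightarrow> real"
  assumes A: "finite A" and k: "k \<le> card A"
  shows "(\<Sum>T\<in>Pow A. (if card T = k then x / real (card A choose k) else 0) * G (card T)) = x * G k"
proof -
  have "(\<Sum>T\<in>Pow A. (if card T = k then x / real (card A choose k) else 0) * G (card T))
      = (\<Sum>T\<in>Pow A. if card T = k then x / real (card A choose k) * G k else 0)"
    by (rule sum.cong) auto
  also have "\<dots> = (\<Sum>T\<in>{T\<in>Pow A. card T = k}. x / real (card A choose k) * G k)"
    by (rule sum.inter_filter[symmetric]) (simp add: A)
  also have "{T\<in>Pow A. card T = k} = {B. B \<subseteq> A \<and> card B = k}" by auto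
  also have "(\<Sum>T\<in>{B. B \<subseteq> A \<and> card B = k}. x / real (card A choose k) * G k)
      = real (card A choose k) * (x / real (card A choose k) * G k)"
    by (simp add: n_subsets[OF A])
  also have "\<dots> = x * G k"
  proof -
    have "0 < card A choose k" using k by simp
    then show ?thesis by simp
  qed
  finally show ?thesis .
qed

definition cw :: "nat \<Rightarrow> nat \<Rightarrow> real \<Rightarrow> real \<Rightarrow> nat set \<Rightarrow> real" where
  "cw n m al be T = (if card T = m then al / real (n choose m) else 0)
                   + (if card T = m + 1 then be / real (n choose (m + 1)) else 0)"

lemma cw_sum:
  fixes G :: "nat \<Rightarrow> real"
  assumes "m + 1 \<le> n"
  shows "(\<Sum>T\<in>Pow {..<n}. cw n m al be T * G (card T)) = al * G m + be * G (m + 1)"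
proof -
  have "(\<Sum>T\<in>Pow {..<n}. cw n m al be T * G (card T))
     = (\<Sum>T\<in>Pow {..<n}. (if card T = m then al / real (n choose m) else 0) * G (card T))
     + (\<Sum>T\<in>Pow {..<n}. (if card T = m + 1 then be / real (n choose (m + 1)) else 0) * G (card T))"
    unfolding cw_def by (simp only: distrib_right sum.distrib)
  also have "\<dots> = al * G m + be * G (m + 1)"
    using sum_card_pick[OF finite_lessThan, unfolded card_lessThan, of m n al G]
      sum_card_pick[OF finite_lessThan, unfolded card_lessThan, of "m + 1" n be G] assms by simp
  finally show ?thesis .
qed

lemma cw_nonneg: "0 \<le> al \<Longrightarrow> 0 \<le> be \<Longrightarrow> 0 \<le> cw n m al be T"
  unfolding cw_def by auto

lemma cw_perm: "s permutes {..<n} \<Longrightarrow> cw n m al be (s ` T) = cw n m al be T"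
  unfolding cw_def by (simp add: card_image permutes_inj inj_on_subset[OF permutes_inj])


lemma sum01:
  fixes D :: nat and f :: "nat \<Rightarrow> complex"
  assumes D: "2 \<le> D" and f: "\<And>a. 2 \<le> a \<Longrightarrow> f a = 0"
  shows "(\<Sum>a<D. f a) = f 0 + (f 1 :: complex)"
proof -
  have "(\<Sum>a<D. f a) = (\<Sum>a\<in>{0,1}. f a)"
    by (rule sum.mono_neutral_right) (use D f in auto)
  then show ?thesis by simp
qed

lemma exists_orth:
  fixes D :: nat and psi :: "nat \<Rightarrow> complex"
  assumes D: "2 \<le> D" and ps: "(\<Sum>a<D. psi a * cnj (psi a)) = 1"
  shows "\<exists>phi. (\<Sum>a<D. phi a * cnj (phi a)) = 1 \<and> (\<Sum>a<D. cnj (phi a) * psi a) = 0"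
proof (cases "psi 0 = 0 \<and> psi 1 = 0")
  case True
  let ?phi = "\<lambda>a::nat. if a = 0 then (1::complex) else 0"
  have "(\<Sum>a<D. ?phi a * cnj (?phi a)) = 1" by (subst sum01[OF D]) auto
  moreover have "(\<Sum>a<D. cnj (?phi a) * psi a) = 0" using True by (subst sum01[OF D]) auto
  ultimately show ?thesis by (intro exI[where x = ?phi] conjI) assumption+
next
  case False
  define s where "s = (cmod (psi 0))\<^sup>2 + (cmod (psi 1))\<^sup>2"
  have s0: "0 < s" using False unfolding s_def
    by (auto simp: add_pos_nonneg add_nonneg_pos)
  define r where "r = sqrt s"
  have r0: "0 < r" using s0 unfolding r_def by simp
  have rr: "r * r = s" using s0 unfolding r_def by simp
  define phi where "phi (a::nat) = (if a = 0 then - cnj (psi 1) else if a = 1 then cnj (psi 0) else 0) / complex_of_real r" for a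
  have "(\<Sum>a<D. phi a * cnj (phi a)) = phi 0 * cnj (phi 0) + phi 1 * cnj (phi 1)"
    by (rule sum01[OF D]) (simp add: phi_def)
  also have "\<dots> = (psi 1 * cnj (psi 1) + psi 0 * cnj (psi 0)) / complex_of_real (r * r)"
    using r0 by (simp add: phi_def field_simps)
  also have "\<dots> = 1"
  proof -
    have e: "psi 1 * cnj (psi 1) + psi 0 * cnj (psi 0) = complex_of_real (r * r)"
      unfolding rr s_def by (simp only: complex_norm_square[symmetric] of_real_add[symmetric] add.commute)
    show ?thesis unfolding e using r0 by simp
  qed
  finally have n1: "(\<Sum>a<D. phi a * cnj (phi a)) = 1" .
  have "(\<Sum>a<D. cnj (phi a) * psi a) = cnj (phi 0) * psi 0 + cnj (phi 1) * psi 1"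
    by (rule sum01[OF D]) (simp add: phi_def)
  also have "\<dots> = 0" using r0 by (simp add: phi_def field_simps)
  finally show ?thesis using n1 by blast
qed

lemma kstar_lhs_gk: "k \<le> Suc N \<Longrightarrow> kstar_lhs N lam k = gk (Suc N) lam k"
  by (cases k) (auto simp: kstar_lhs_def gk_def of_nat_diff algebra_simps)

lemma kstar_lhs_big:
  assumes l0: "0 < lam" and l1: "lam < 1" and N: "1 \<le> N" and k: "Suc N \<le> k"
  shows "kstar_lhs N lam k \<le> (real N + 1) * lam ^ N"
proof -
  have k0: "k \<noteq> 0" using k by simp
  have e: "lam * kstar_lhs N lam k = lam ^ k * ((real N + 1 - real k) * lam + real k)"
    using k0 by (cases k) (auto simp: kstar_lhs_def algebra_simps)
  have d: "(real N + 1) * (lam + (1 - lam) * (real k - real N)) - ((real N + 1 - real k) * lam + real k)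
       = (1 - lam) * real N * (real k - real N - 1)" by (simp add: algebra_simps)
  have "0 \<le> (1 - lam) * real N * (real k - real N - 1)"
    using l1 k by (intro mult_nonneg_nonneg) auto
  then have c: "(real N + 1 - real k) * lam + real k \<le> (real N + 1) * (lam + (1 - lam) * (real k - real N))"
    using d by linarith
  have "lam * kstar_lhs N lam k \<le> lam ^ k * ((real N + 1) * (lam + (1 - lam) * (real k - real N)))"
    unfolding e by (rule mult_left_mono[OF c]) (use l0 in simp)
  also have "\<dots> = (real N + 1) * (lam ^ k * (lam + (1 - lam) * (real k - real N)))" by simp
  also have "\<dots> \<le> (real N + 1) * lam ^ (N + 1)"
    by (rule mult_left_mono[OF key_ineq[OF l0 l1]]) simp
  also have "\<dots> = lam * ((real N + 1) * lam ^ N)" by simp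
  finally show ?thesis using l0 by simp
qed

lemma kstar_props:
  assumes l0: "0 < lam" and l1: "lam < 1" and N: "1 \<le> N" and d1: "delta \<le> 1" and dl: "lam ^ N < delta"
  shows "kstar N delta lam \<le> N"
    and "(real N + 1) * delta \<le> kstar_lhs N lam (kstar N delta lam)"
    and "\<not> (real N + 1) * delta \<le> kstar_lhs N lam (kstar N delta lam + 1)"
proof -
  let ?P = "\<lambda>k. (real N + 1) * delta \<le> kstar_lhs N lam k"
  have P0: "?P 0" using d1 by (simp add: kstar_lhs_def)
  have bnd: "y \<le> N" if "?P y" for y
  proof (rule ccontr)
    assume "\<not> y \<le> N"
    then have "Suc N \<le> y" by simp
    then have "kstar_lhs N lam y \<le> (real N + 1) * lam ^ N" by (rule kstar_lhs_big[OF l0 l1 N])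
    also have "\<dots> < (real N + 1) * delta" using dl by simp
    finally show False using that by simp
  qed
  show P: "?P (kstar N delta lam)" unfolding kstar_def by (rule GreatestI_nat[where P = ?P, OF P0 bnd])
  show "kstar N delta lam \<le> N" by (rule bnd[OF P])
  show "\<not> ?P (kstar N delta lam + 1)"
  proof
    assume "?P (kstar N delta lam + 1)"
    then have "kstar N delta lam + 1 \<le> kstar N delta lam" unfolding kstar_def by (rule Greatest_le_nat[where P = ?P, OF _ bnd])
    then show False by simp
  qed
qed

lemma zeta_k_eq:
  assumes l0: "0 < lam" and l1: "lam < 1" and N: "1 \<le> N"
  shows "zeta_k N delta lam m = aco N lam m + bco N lam m * delta"
proof -
  have D: "Dm N lam m \<noteq> 0" using Dm_pos[OF l0 l1 N, of m] by simp
  have "zeta_k N delta lam m = (lam * (1 + (real N - real m) * (1 - lam)) * delta - lam ^ (m + 1)) / Dm N lam m"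
    unfolding zeta_k_def Dm_def by (rule arg_cong2[where f = "(/)"]) (simp_all add: algebra_simps)
  also have "\<dots> = aco N lam m + bco N lam m * delta"
    unfolding aco_def bco_def using D by (simp add: field_simps)
  finally show ?thesis .
qed


lemma card_le_n: "T \<in> Pow {..<n} \<Longrightarrow> card T \<le> n"
  using card_mono[of "{..<n}" T] by simp

lemma sum_lin:
  fixes w h g :: "'a \<Rightarrow> real"
  shows "(\<Sum>x\<in>A. w x * (h x - b * g x - c)) = (\<Sum>x\<in>A. w x * h x) - b * (\<Sum>x\<in>A. w x * g x) - c * (\<Sum>x\<in>A. w x)"
  by (simp add: right_diff_distrib sum_subtractf sum_distrib_left mult_ac)

lemma lower_bound_lin:
  assumes dens: "density_op D (Suc N) rho" and pinv: "perm_inv D (Suc N) rho"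
    and nrm: "(\<Sum>c<D. psi c * cnj (psi c)) = 1"
    and l0: "0 < lam" and l1: "lam < 1" and N: "1 \<le> N"
  shows "aco N lam m + bco N lam m * pval D N psi lam rho \<le> fval D N psi lam rho"
proof -
  let ?w = "wT D (Suc N) psi rho"
  let ?A = "Pow {..<Suc N}"
  let ?n = "real (Suc N)"
  let ?a = "aco N lam m" and ?b = "bco N lam m"
  have tr: "(\<Sum>T\<in>?A. ?w T) = 1" by (rule trace_expand[OF dens])
  have "?n * fval D N psi lam rho - ?b * (?n * pval D N psi lam rho) - ?n * ?a * (\<Sum>T\<in>?A. ?w T)
      = (\<Sum>T\<in>?A. ?w T * (hk (Suc N) lam (card T) - ?b * gk (Suc N) lam (card T) - ?n * ?a))"
    unfolding fval_count[OF pinv] pval_count[OF pinv] sum_lin by (simp add: mult_ac)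
  also have "\<dots> \<ge> 0"
  proof (rule sum_nonneg)
    fix T assume T: "T \<in> ?A"
    show "0 \<le> ?w T * (hk (Suc N) lam (card T) - ?b * gk (Suc N) lam (card T) - ?n * ?a)"
      by (rule mult_nonneg_nonneg[OF wT_nonneg[OF dens nrm] lp_ineq[OF l0 l1 N card_le_n[OF T]]])
  qed
  finally have "0 \<le> ?n * (fval D N psi lam rho - ?b * pval D N psi lam rho - ?a)"
    unfolding tr by (simp add: algebra_simps)
  then show ?thesis by (simp add: zero_le_mult_iff)
qed

lemma f_nonneg:
  assumes dens: "density_op D (Suc N) rho" and pinv: "perm_inv D (Suc N) rho"
    and nrm: "(\<Sum>c<D. psi c * cnj (psi c)) = 1" and l0: "0 < lam"
  shows "0 \<le> fval D N psi lam rho"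
proof -
  have "0 \<le> (\<Sum>T\<in>Pow {..<Suc N}. wT D (Suc N) psi rho T * hk (Suc N) lam (card T))"
    using l0 by (intro sum_nonneg mult_nonneg_nonneg wT_nonneg[OF dens nrm]) (simp add: hk_def)
  then have "0 \<le> real (Suc N) * fval D N psi lam rho" unfolding fval_count[OF pinv] .
  then show ?thesis by (simp add: zero_le_mult_iff)
qed

lemma construct:
  assumes nrm: "(\<Sum>a<D. psi a * cnj (psi a)) = 1" and ph: "(\<Sum>a<D. phi a * cnj (phi a)) = 1"
    and orth: "(\<Sum>a<D. cnj (phi a) * psi a) = 0"
    and al: "0 \<le> al" and be: "0 \<le> be" and ab: "al + be = 1" and m: "m + 1 \<le> Suc N"
  defines "r0 \<equiv> rhoc psi phi (Suc N) (cw (Suc N) m al be)"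
  shows "density_op D (Suc N) r0" and "perm_inv D (Suc N) r0"
    and "real (Suc N) * pval D N psi lam r0 = al * gk (Suc N) lam m + be * gk (Suc N) lam (m + 1)"
    and "real (Suc N) * fval D N psi lam r0 = al * hk (Suc N) lam m + be * hk (Suc N) lam (m + 1)"
proof -
  have csum: "(\<Sum>S\<in>Pow {..<Suc N}. cw (Suc N) m al be S) = 1"
    using cw_sum[OF m, of al be "\<lambda>_. 1"] ab by simp
  show "density_op D (Suc N) r0" unfolding r0_def
    by (rule rhoc_density[OF nrm ph cw_nonneg[OF al be] csum])
  show pinv: "perm_inv D (Suc N) r0" unfolding r0_def
    by (rule rhoc_perm_inv) (rule cw_perm)
  have w: "wT D (Suc N) psi r0 T = cw (Suc N) m al be T" if "T \<in> Pow {..<Suc N}" for T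
    unfolding r0_def using that by (intro wT_rhoc[OF nrm ph orth]) simp
  show "real (Suc N) * pval D N psi lam r0 = al * gk (Suc N) lam m + be * gk (Suc N) lam (m + 1)"
  proof -
    have "(\<Sum>T\<in>Pow {..<Suc N}. wT D (Suc N) psi r0 T * gk (Suc N) lam (card T))
        = (\<Sum>T\<in>Pow {..<Suc N}. cw (Suc N) m al be T * gk (Suc N) lam (card T))"
      by (rule sum.cong[OF refl]) (simp add: w)
    then show ?thesis unfolding pval_count[OF pinv] cw_sum[OF m] .
  qed
  show "real (Suc N) * fval D N psi lam r0 = al * hk (Suc N) lam m + be * hk (Suc N) lam (m + 1)"
  proof -
    have "(\<Sum>T\<in>Pow {..<Suc N}. wT D (Suc N) psi r0 T * hk (Suc N) lam (card T))
        = (\<Sum>T\<in>Pow {..<Suc N}. cw (Suc N) m al be T * hk (Suc N) lam (card T))"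
      by (rule sum.cong[OF refl]) (simp add: w)
    then show ?thesis unfolding fval_count[OF pinv] cw_sum[OF m] .
  qed
qed


lemma mix_eq:
  fixes g0 g1 x :: real
  assumes "0 < g0 - g1"
  shows "((x - g1) / (g0 - g1)) * g0 + ((g0 - x) / (g0 - g1)) * g1 = x"
proof -
  have ne: "g0 - g1 \<noteq> 0" using assms by simp
  have "((x - g1) / (g0 - g1)) * g0 + ((g0 - x) / (g0 - g1)) * g1 = ((x - g1) * g0 + (g0 - x) * g1) / (g0 - g1)"
    by (simp add: add_divide_distrib times_divide_eq_left)
  also have "(x - g1) * g0 + (g0 - x) * g1 = x * (g0 - g1)" by (simp add: algebra_simps)
  finally show ?thesis using ne by simp
qed

lemma feasible_iff:
  "rho \<in> feasible D N psi lam delta \<longleftrightarrow>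
     density_op D (Suc N) rho \<and> perm_inv D (Suc N) rho \<and> delta \<le> pval D N psi lam rho"
  by (simp add: feasible_def)

lemma main_core:
  fixes D N :: nat and psi :: "nat \<Rightarrow> complex" and lam delta :: real
  assumes D2: "D \<ge> 2"
    and nrm: "(\<Sum>c<D. psi c * cnj (psi c)) = 1"
    and N: "N \<ge> 1"
    and l0: "0 < lam" and l1: "lam < 1"
    and d0: "0 < delta" and d1: "delta \<le> 1"
  shows "\<exists>r0 \<in> feasible D N psi lam delta. fval D N psi lam r0 = zeta_formula N delta lam
            \<and> fval D N psi lam r0 / pval D N psi lam r0 = zeta_formula N delta lam / delta"
    and "\<And>rho. rho \<in> feasible D N psi lam delta \<Longrightarrow> zeta_formula N delta lam \<le> fval D N psi lam rho
            \<and> zeta_formula N delta lam / delta \<le> fval D N psi lam rho / pval D N psi lam rho"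
proof -
  obtain phi where ph: "(\<Sum>a<D. phi a * cnj (phi a)) = 1" and orth: "(\<Sum>a<D. cnj (phi a) * psi a) = 0"
    using exists_orth[OF D2 nrm] by blast
  let ?Z = "zeta_formula N delta lam"
  let ?n = "real (Suc N)"
  show "\<exists>r0 \<in> feasible D N psi lam delta. fval D N psi lam r0 = ?Z
            \<and> fval D N psi lam r0 / pval D N psi lam r0 = ?Z / delta"
  proof (cases "delta \<le> lam ^ N")
    case True
    have Z: "?Z = 0" using True by (simp add: zeta_formula_def)
    let ?r = "rhoc psi phi (Suc N) (cw (Suc N) N 0 1)"
    have c: "density_op D (Suc N) ?r" "perm_inv D (Suc N) ?r"
      "?n * pval D N psi lam ?r = 0 * gk (Suc N) lam N + 1 * gk (Suc N) lam (N + 1)"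
      "?n * fval D N psi lam ?r = 0 * hk (Suc N) lam N + 1 * hk (Suc N) lam (N + 1)"
      by (rule construct[OF nrm ph orth]; simp)+
    have p: "pval D N psi lam ?r = lam ^ N" using c(3) by (simp add: gk_def)
    have f: "fval D N psi lam ?r = 0" using c(4) by (simp add: hk_def)
    have "?r \<in> feasible D N psi lam delta" using c(1,2) p True by (simp add: feasible_iff)
    then show ?thesis using f Z by auto
  next
    case False
    let ?m = "kstar N delta lam"
    have Z: "?Z = zeta_k N delta lam ?m" using False by (simp add: zeta_formula_def)
    have kN: "?m \<le> N" and P0: "?n * delta \<le> kstar_lhs N lam ?m"
      and P1: "\<not> ?n * delta \<le> kstar_lhs N lam (?m + 1)"
      using kstar_props[OF l0 l1 N d1] False by (auto simp: add.commute)
    let ?g0 = "gk (Suc N) lam ?m" and ?g1 = "gk (Suc N) lam (?m + 1)"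
    have g0: "?n * delta \<le> ?g0" using P0 kN by (simp add: kstar_lhs_gk)
    have g1: "?g1 < ?n * delta" using P1 kN kstar_lhs_gk[of "?m + 1" N lam] by simp
    have gpos: "0 < ?g0 - ?g1" using g0 g1 by simp
    define al where "al = (?n * delta - ?g1) / (?g0 - ?g1)"
    define be where "be = (?g0 - ?n * delta) / (?g0 - ?g1)"
    have al0: "0 \<le> al" unfolding al_def using g1 gpos by simp
    have be0: "0 \<le> be" unfolding be_def using g0 gpos by simp
    have ab: "al + be = 1" unfolding al_def be_def add_divide_distrib[symmetric] using gpos by simp
    have pd: "al * ?g0 + be * ?g1 = ?n * delta" unfolding al_def be_def by (rule mix_eq[OF gpos])
    have m1: "?m + 1 \<le> Suc N" using kN by simp
    let ?r = "rhoc psi phi (Suc N) (cw (Suc N) ?m al be)"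
    have c: "density_op D (Suc N) ?r" "perm_inv D (Suc N) ?r"
      "?n * pval D N psi lam ?r = al * ?g0 + be * ?g1"
      "?n * fval D N psi lam ?r = al * hk (Suc N) lam ?m + be * hk (Suc N) lam (?m + 1)"
      by (rule construct[OF nrm ph orth al0 be0 ab m1])+
    have p: "pval D N psi lam ?r = delta" using c(3) pd by simp
    let ?a = "aco N lam ?m" and ?b = "bco N lam ?m"
    have h0: "hk (Suc N) lam ?m = ?b * ?g0 + ?n * ?a"
      using lp_eq[OF l0 l1 N, of ?m ?m] kN by simp
    have h1: "hk (Suc N) lam (?m + 1) = ?b * ?g1 + ?n * ?a"
      using lp_eq[OF l0 l1 N, of "?m + 1" ?m] kN by simp
    have "?n * fval D N psi lam ?r = ?b * (al * ?g0 + be * ?g1) + ?n * ?a * (al + be)"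
      unfolding c(4) h0 h1 by (simp add: algebra_simps)
    also have "\<dots> = ?n * (?a + ?b * delta)" unfolding pd ab by (simp add: algebra_simps)
    finally have f: "fval D N psi lam ?r = ?a + ?b * delta" by simp
    have fZ: "fval D N psi lam ?r = ?Z" unfolding f Z zeta_k_eq[OF l0 l1 N] ..
    have "?r \<in> feasible D N psi lam delta" using c(1,2) p by (simp add: feasible_iff)
    then show ?thesis using fZ p by auto
  qed
next
  fix rho assume r: "rho \<in> feasible D N psi lam delta"
  have dens: "density_op D (Suc N) rho" and pinv: "perm_inv D (Suc N) rho"
    and pd: "delta \<le> pval D N psi lam rho" using r by (auto simp: feasible_iff)
  have ppos: "0 < pval D N psi lam rho" using pd d0 by simp
  have f0: "0 \<le> fval D N psi lam rho" by (rule f_nonneg[OF dens pinv nrm l0])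
  show "zeta_formula N delta lam \<le> fval D N psi lam rho
            \<and> zeta_formula N delta lam / delta \<le> fval D N psi lam rho / pval D N psi lam rho"
  proof (cases "delta \<le> lam ^ N")
    case True
    then show ?thesis using f0 ppos by (simp add: zeta_formula_def)
  next
    case False
    let ?m = "kstar N delta lam"
    let ?a = "aco N lam ?m" and ?b = "bco N lam ?m"
    let ?p = "pval D N psi lam rho" and ?f = "fval D N psi lam rho"
    have Z: "zeta_formula N delta lam = ?a + ?b * delta"
      using False by (simp add: zeta_formula_def zeta_k_eq[OF l0 l1 N])
    have kN: "?m \<le> N" using kstar_props(1)[OF l0 l1 N d1] False by simp
    have Dp: "0 < Dm N lam ?m" by (rule Dm_pos[OF l0 l1 N])
    have b0: "0 \<le> ?b" unfolding bco_def using Dp l0 l1 kN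
      by (intro divide_nonneg_pos mult_nonneg_nonneg) auto
    have a0: "?a \<le> 0" unfolding aco_def using Dp l0 by simp
    have lb: "?a + ?b * ?p \<le> ?f" by (rule lower_bound_lin[OF dens pinv nrm l0 l1 N])
    have "?a + ?b * delta \<le> ?a + ?b * ?p" using b0 pd by (simp add: mult_left_mono)
    then have c1: "?a + ?b * delta \<le> ?f" using lb by simp
    have "(?a + ?b * delta) * ?p \<le> ?f * delta"
    proof -
      have "?a * ?p \<le> ?a * delta" using a0 pd by (simp add: mult_left_mono_neg)
      then have "(?a + ?b * delta) * ?p \<le> (?a + ?b * ?p) * delta" by (simp add: algebra_simps)
      also have "\<dots> \<le> ?f * delta" using lb d0 by (simp add: mult_right_mono)
      finally show ?thesis .
    qed
    then have c2: "(?a + ?b * delta) / delta \<le> ?f / ?p" using d0 ppos by (simp add: divide_simps)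
    show ?thesis unfolding Z using c1 c2 by simp
  qed
qed

theorem theorem1:
  fixes D N :: nat and psi :: "nat \<Rightarrow> complex" and lam delta :: real
  assumes "D \<ge> 2"
    and "(\<Sum>a<D. (cmod (psi a))\<^sup>2) = 1"
    and "N \<ge> 1"
    and "0 < lam" and "lam < 1"
    and "0 < delta" and "delta \<le> 1"
  shows "zeta D N psi lam delta = zeta_formula N delta lam
    \<and> Ffid D N psi lam delta = zeta D N psi lam delta / delta"
proof -
  have nrm: "(\<Sum>c<D. psi c * cnj (psi c)) = 1"
  proof -
    have "(\<Sum>c<D. psi c * cnj (psi c)) = complex_of_real (\<Sum>a<D. (cmod (psi a))\<^sup>2)"
      by (simp only: of_real_sum complex_norm_square)
    then show ?thesis using assms(2) by simp
  qed
  note core = main_core[OF assms(1) nrm assms(3-7)]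
  obtain r0 where r0: "r0 \<in> feasible D N psi lam delta"
    and f0: "fval D N psi lam r0 = zeta_formula N delta lam"
    and q0: "fval D N psi lam r0 / pval D N psi lam r0 = zeta_formula N delta lam / delta"
    using core(1) by blast
  have z: "zeta D N psi lam delta = zeta_formula N delta lam"
    unfolding zeta_def
  proof (rule cInf_eq_minimum)
    show "zeta_formula N delta lam \<in> fval D N psi lam ` feasible D N psi lam delta"
      using r0 f0 by (metis image_eqI)
    fix x assume "x \<in> fval D N psi lam ` feasible D N psi lam delta"
    then show "zeta_formula N delta lam \<le> x" using core(2) by blast
  qed
  have F: "Ffid D N psi lam delta = zeta_formula N delta lam / delta"
    unfolding Ffid_def
  proof (rule cInf_eq_minimum)
    show "zeta_formula N delta lam / delta \<in> (\<lambda>rho. fval D N psi lam rho / pval D N psi lam rho) ` feasible D N psi lam delta"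
      using r0 q0 by (metis (mono_tags, lifting) image_eqI)
    fix x assume "x \<in> (\<lambda>rho. fval D N psi lam rho / pval D N psi lam rho) ` feasible D N psi lam delta"
    then show "zeta_formula N delta lam / delta \<le> x" using core(2) by blast
  qed
  show ?thesis using z F by simp
qed

end
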